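(* Let $K\subset\mathbb{R}^n$ and $C\subset\mathbb{R}^m$ be nonempty, convex, closed and bounded sets, and let $f,h:\mathbb{R}^n\times\mathbb{R}^m\to\mathbb{R}$ be continuous functions such that, for every $y\in K$, $f(y,\cdot)$ and $h(y,\cdot)$ are convex, and such that $f$ takes only positive values. Let $\varepsilon>\varepsilon'>0$, let $y_\varepsilon$ (resp. $y_{\varepsilon'}$) be an optimal solution of $(\mathcal{P}_\varepsilon)$ (resp. $(\mathcal{P}_{\varepsilon'})$), and let $x_\varepsilon\in\mathcal{S}_\varepsilon(y_\varepsilon)$, $x_{\varepsilon'}\in\mathcal{S}_{\varepsilon'}(y_{\varepsilon'})$. Let $y^*$ be an optimal solution of $(\widetilde{\mathcal{P}})$ and $x^*\in\mathcal{S}(y^* )$. Then $$f^2(y_\varepsilon,x_\varepsilon)\le f^2(y_{\varepsilon'},x_{\varepsilon'})\le f^2(y^*,x^* ).$$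
   Context: $f^2=(f)^2$. For $y\in K$: $\mathcal{S}(y)=\operatorname{argmin}\{h(y,z)\mid z\in C\}$; for $\varepsilon>0$, $\mathcal{S}_\varepsilon(y)=\operatorname{argmin}\{h(y,z)+\varepsilon f^2(y,z)\mid z\in C\}$; $\widetilde{\mathcal{S}}(y)=\operatorname{argmin}\{f^2(y,z)\mid z\in\mathcal{S}(y)\}$. $(\mathcal{P}_\varepsilon)$: maximize $f(y,x)$ over $y\in K$, $x\in\mathcal{S}_\varepsilon(y)$; $y_\varepsilon\in K$ is optimal if $f(y_\varepsilon,x')\ge f(y,x)$ for all $x'\in\mathcal{S}_\varepsilon(y_\varepsilon)$, $y\in K$, $x\in\mathcal{S}_\varepsilon(y)$. $(\widetilde{\mathcal{P}})$: maximize $f(y,x)$ over $y\in K$, $x\in\widetilde{\mathcal{S}}(y)$; $y^*\in K$ is optimal if $f(y^*,x')\ge f(y,x)$ for all $x'\in\widetilde{\mathcal{S}}(y^* )$, $y\in K$, $x\in\widetilde{\mathcal{S}}(y)$. *)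

theory Defs
  imports "HOL-Analysis.Analysis"
begin

definition argmin_set :: "('b \<Rightarrow> real) \<Rightarrow> 'b set \<Rightarrow> 'b set" where
  "argmin_set g A = {z \<in> A. \<forall>z'\<in>A. g z \<le> g z'}"

definition S_sol :: "('a \<times> 'b \<Rightarrow> real) \<Rightarrow> 'b set \<Rightarrow> 'a \<Rightarrow> 'b set" where
  "S_sol h C y = argmin_set (\<lambda>z. h (y, z)) C"

definition S_eps :: "('a \<times> 'b \<Rightarrow> real) \<Rightarrow> ('a \<times> 'b \<Rightarrow> real) \<Rightarrow> 'b set \<Rightarrow> real \<Rightarrow> 'a \<Rightarrow> 'b set" where
  "S_eps f h C eps y = argmin_set (\<lambda>z. h (y, z) + eps * (f (y, z))^2) C"

definition S_tilde :: "('a \<times> 'b \<Rightarrow> real) \<Rightarrow> ('a \<times> 'b \<Rightarrow> real) \<Rightarrow> 'b set \<Rightarrow> 'a \<Rightarrow> 'b set" where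
  "S_tilde f h C y = argmin_set (\<lambda>z. (f (y, z))^2) (S_sol h C y)"

text \<open>y0 is an optimal solution of: maximize f(y,x) over y in K, x in Sol(y) (pessimistic sense
  as in the paper: f(y0,x') \<ge> f(y,x) for all x' in Sol(y0), y in K, x in Sol(y)).\<close>
definition optimal_sol :: "('a \<times> 'b \<Rightarrow> real) \<Rightarrow> 'a set \<Rightarrow> ('a \<Rightarrow> 'b set) \<Rightarrow> 'a \<Rightarrow> bool" where
  "optimal_sol f K Sol y0 \<longleftrightarrow> y0 \<in> K \<and>
     (\<forall>x'\<in>Sol y0. \<forall>y\<in>K. \<forall>x\<in>Sol y. f (y, x) \<le> f (y0, x'))"

end

theory Submission
  imports Defs
begin

lemma cont_slice:
  assumes "continuous_on UNIV (g :: 'a::topological_space \<times> 'b::topological_space \<Rightarrow> real)"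
  shows "continuous_on A (\<lambda>z. g (y, z))"
  by (rule continuous_on_compose2[OF assms]) (auto intro!: continuous_intros)

lemma argmin_ne:
  assumes "compact A" "A \<noteq> {}" "continuous_on A g"
  shows "argmin_set g A \<noteq> {}"
  using continuous_attains_inf[OF assms] unfolding argmin_set_def by blast

lemma S_sol_compact:
  assumes "compact C" "continuous_on UNIV h"
  shows "compact (S_sol h C y)"
proof (cases "C = {}")
  case True then show ?thesis by (simp add: S_sol_def argmin_set_def)
next
  case False
  obtain m where m: "m \<in> C" "\<forall>z\<in>C. h (y, m) \<le> h (y, z)"
    using continuous_attains_inf[OF assms(1) False cont_slice[OF assms(2)]] by blast
  have eq: "S_sol h C y = C \<inter> {z. h (y, z) \<le> h (y, m)}"
    using m by (auto simp: S_sol_def argmin_set_def intro: order_trans)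
  have "closed {z. h (y, z) \<le> h (y, m)}"
    by (rule closed_Collect_le) (auto intro: cont_slice[OF assms(2)])
  then show ?thesis unfolding eq using assms(1) by (simp add: compact_Int_closed)
qed

theorem lemma4p2:
  fixes K :: "'a::euclidean_space set" and C :: "'b::euclidean_space set"
    and f h :: "'a \<times> 'b \<Rightarrow> real"
    and \<epsilon> \<epsilon>' :: real and y\<^sub>\<epsilon> y\<^sub>\<epsilon>' y\<^sub>s x\<^sub>\<epsilon> x\<^sub>\<epsilon>' x\<^sub>s
  assumes "K \<noteq> {}" "convex K" "closed K" "bounded K"
    and "C \<noteq> {}" "convex C" "closed C" "bounded C"
    and "continuous_on UNIV f" "continuous_on UNIV h"
    and "\<forall>y\<in>K. convex_on UNIV (\<lambda>x. f (y, x))"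
    and "\<forall>y\<in>K. convex_on UNIV (\<lambda>x. h (y, x))"
    and "\<forall>p. f p > 0"
    and "\<epsilon> > \<epsilon>'" "\<epsilon>' > 0"
    and "optimal_sol f K (S_eps f h C \<epsilon>) y\<^sub>\<epsilon>"
    and "optimal_sol f K (S_eps f h C \<epsilon>') y\<^sub>\<epsilon>'"
    and "x\<^sub>\<epsilon> \<in> S_eps f h C \<epsilon> y\<^sub>\<epsilon>"
    and "x\<^sub>\<epsilon>' \<in> S_eps f h C \<epsilon>' y\<^sub>\<epsilon>'"
    and "optimal_sol f K (S_tilde f h C) y\<^sub>s"
    and "x\<^sub>s \<in> S_sol h C y\<^sub>s"
  shows "(f (y\<^sub>\<epsilon>, x\<^sub>\<epsilon>))^2 \<le> (f (y\<^sub>\<epsilon>', x\<^sub>\<epsilon>'))^2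
       \<and> (f (y\<^sub>\<epsilon>', x\<^sub>\<epsilon>'))^2 \<le> (f (y\<^sub>s, x\<^sub>s))^2"
proof -
  have cC: "compact C" using assms(7,8) by (simp add: compact_eq_bounded_closed)
  have fc: "continuous_on A (\<lambda>z. f (y, z))" for A y using cont_slice[OF assms(9)] .
  have hc: "continuous_on A (\<lambda>z. h (y, z))" for A y using cont_slice[OF assms(10)] .
  have pos: "\<And>p. f p > 0" using assms(13) by blast
  have sq: "f p \<le> f q \<longleftrightarrow> (f p)^2 \<le> (f q)^2" for p q
    using pos[of p] pos[of q] by (simp add: power_mono_iff)
  have "continuous_on C (\<lambda>z. h (y\<^sub>\<epsilon>, z) + \<epsilon>' * (f (y\<^sub>\<epsilon>, z))^2)"
    by (intro continuous_intros hc fc)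
  from argmin_ne[OF cC assms(5) this] obtain x' where x': "x' \<in> S_eps f h C \<epsilon>' y\<^sub>\<epsilon>"
    unfolding S_eps_def by blast
  have yeK: "y\<^sub>\<epsilon> \<in> K" using assms(16) by (simp add: optimal_sol_def)
  have A1: "f (y\<^sub>\<epsilon>, x') \<le> f (y\<^sub>\<epsilon>', x\<^sub>\<epsilon>')"
    using assms(17) x' yeK assms(19) by (auto simp: optimal_sol_def)
  have B1: "h (y\<^sub>\<epsilon>, x\<^sub>\<epsilon>) + \<epsilon> * (f (y\<^sub>\<epsilon>, x\<^sub>\<epsilon>))^2 \<le> h (y\<^sub>\<epsilon>, x') + \<epsilon> * (f (y\<^sub>\<epsilon>, x'))^2"
    and B2: "h (y\<^sub>\<epsilon>, x') + \<epsilon>' * (f (y\<^sub>\<epsilon>, x'))^2 \<le> h (y\<^sub>\<epsilon>, x\<^sub>\<epsilon>) + \<epsilon>' * (f (y\<^sub>\<epsilon>, x\<^sub>\<epsilon>))^2"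
    using assms(18) x' by (auto simp: S_eps_def argmin_set_def)
  have "(\<epsilon> - \<epsilon>') * ((f (y\<^sub>\<epsilon>, x\<^sub>\<epsilon>))^2 - (f (y\<^sub>\<epsilon>, x'))^2) \<le> 0"
    using B1 B2 by (simp add: algebra_simps)
  then have C1: "(f (y\<^sub>\<epsilon>, x\<^sub>\<epsilon>))^2 \<le> (f (y\<^sub>\<epsilon>, x'))^2"
    using assms(14) by (simp add: mult_le_0_iff)
  have I1: "(f (y\<^sub>\<epsilon>, x\<^sub>\<epsilon>))^2 \<le> (f (y\<^sub>\<epsilon>', x\<^sub>\<epsilon>'))^2"
    using C1 A1 sq by (meson order_trans)
  have ye'K: "y\<^sub>\<epsilon>' \<in> K" using assms(17) by (simp add: optimal_sol_def)
  have ysK: "y\<^sub>s \<in> K" using assms(20) by (simp add: optimal_sol_def)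
  have Sne: "S_sol h C y \<noteq> {}" for y
    using argmin_ne[OF cC assms(5) hc] by (simp add: S_sol_def)
  have Stne: "S_tilde f h C y \<noteq> {}" for y
    using argmin_ne[OF S_sol_compact[OF cC assms(10)] Sne] fc
    by (simp add: S_tilde_def continuous_intros)
  obtain u where u: "u \<in> S_tilde f h C y\<^sub>\<epsilon>'" using Stne by blast
  obtain v where v: "v \<in> S_tilde f h C y\<^sub>s" using Stne by blast
  have A2: "f (y\<^sub>\<epsilon>', u) \<le> f (y\<^sub>s, v)"
    using assms(20) u v ye'K by (auto simp: optimal_sol_def)
  have uS: "u \<in> S_sol h C y\<^sub>\<epsilon>'" using u by (simp add: S_tilde_def argmin_set_def)
  have D1: "h (y\<^sub>\<epsilon>', x\<^sub>\<epsilon>') + \<epsilon>' * (f (y\<^sub>\<epsilon>', x\<^sub>\<epsilon>'))^2 \<le> h (y\<^sub>\<epsilon>', u) + \<epsilon>' * (f (y\<^sub>\<epsilon>', u))^2"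
    and D2: "h (y\<^sub>\<epsilon>', u) \<le> h (y\<^sub>\<epsilon>', x\<^sub>\<epsilon>')"
    using assms(19) uS by (auto simp: S_eps_def S_sol_def argmin_set_def)
  have "\<epsilon>' * (f (y\<^sub>\<epsilon>', x\<^sub>\<epsilon>'))^2 \<le> \<epsilon>' * (f (y\<^sub>\<epsilon>', u))^2" using D1 D2 by linarith
  then have C2: "(f (y\<^sub>\<epsilon>', x\<^sub>\<epsilon>'))^2 \<le> (f (y\<^sub>\<epsilon>', u))^2" using assms(15) by simp
  have C3: "(f (y\<^sub>s, v))^2 \<le> (f (y\<^sub>s, x\<^sub>s))^2"
    using v assms(21) by (simp add: S_tilde_def argmin_set_def)
  have I2: "(f (y\<^sub>\<epsilon>', x\<^sub>\<epsilon>'))^2 \<le> (f (y\<^sub>s, x\<^sub>s))^2"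
    using C2 A2 C3 sq by (meson order_trans)
  show ?thesis using I1 I2 by blast
qed

end
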